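(* Let $X$ be a set and let $T:\mathcal P(X)\to\mathcal P(X)$ be an order reversing quasi involution. Then there exists a symmetric function $c:X\times X\to\{-1,1\}$ (i.e. $c(x,y)=c(y,x)$ for all $x,y\in X$) such that for every $K\subseteq X$, \[ TK=K^c:=\{y\in X:\ \inf_{x\in K}c(x,y)\ge 0\}. \]
   Context: $\mathcal P(X)$ denotes the power set of $X$. A map $T:\mathcal P(X)\to\mathcal P(X)$ is an order reversing quasi involution if for all $K,L\subseteq X$: (i) $K\subseteq TTK$, and (ii) $L\subseteq K$ implies $TK\subseteq TL$. The infimum over the empty set is $+\infty$, so $\emptyset^c=X$. *)

theory Defs
  imports "HOL-Library.Extended_Real"
begin

definition order_reversing_quasi_involution :: "'a set \<Rightarrow> ('a set \<Rightarrow> 'a set) \<Rightarrow> bool" where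
  "order_reversing_quasi_involution X T \<longleftrightarrow>
     (\<forall>K. K \<subseteq> X \<longrightarrow> T K \<subseteq> X) \<and>
     (\<forall>K. K \<subseteq> X \<longrightarrow> K \<subseteq> T (T K)) \<and>
     (\<forall>K L. K \<subseteq> X \<longrightarrow> L \<subseteq> K \<longrightarrow> T K \<subseteq> T L)"

text \<open>The c-dual set, with infimum taken in the extended reals (inf of empty set is +infinity).\<close>
definition cdual :: "'a set \<Rightarrow> ('a \<Rightarrow> 'a \<Rightarrow> int) \<Rightarrow> 'a set \<Rightarrow> 'a set" where
  "cdual X c K = {y \<in> X. (INF x\<in>K. ereal (real_of_int (c x y))) \<ge> 0}"

end

theory Submission
  imports Defs
begin

theorem theorem1p3:
  fixes X :: "'a set" and T :: "'a set \<Rightarrow> 'a set"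
  assumes "order_reversing_quasi_involution X T"
  shows "\<exists>c :: 'a \<Rightarrow> 'a \<Rightarrow> int.
           (\<forall>x\<in>X. \<forall>y\<in>X. c x y \<in> {-1, 1}) \<and>
           (\<forall>x\<in>X. \<forall>y\<in>X. c x y = c y x) \<and>
           (\<forall>K. K \<subseteq> X \<longrightarrow> T K = cdual X c K)"
proof -
  have sub: "\<And>K. K \<subseteq> X \<Longrightarrow> T K \<subseteq> X"
    and inv: "\<And>K. K \<subseteq> X \<Longrightarrow> K \<subseteq> T (T K)"
    and anti: "\<And>K L. K \<subseteq> X \<Longrightarrow> L \<subseteq> K \<Longrightarrow> T K \<subseteq> T L"
    using assms unfolding order_reversing_quasi_involution_def by (meson, meson, meson)
  have symm: "x \<in> T {y}" if "x \<in> X" "y \<in> X" "y \<in> T {x}" for x y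
  proof -
    have "T (T {x}) \<subseteq> T {y}" using anti[of "T {x}" "{y}"] sub[of "{x}"] that by auto
    moreover have "x \<in> T (T {x})" using inv[of "{x}"] that by auto
    ultimately show ?thesis by auto
  qed
  define c :: "'a \<Rightarrow> 'a \<Rightarrow> int" where "c x y = (if y \<in> T {x} then 1 else -1)" for x y
  have key: "T K = {y \<in> X. \<forall>x\<in>K. y \<in> T {x}}" if K: "K \<subseteq> X" for K
  proof
    show "T K \<subseteq> {y \<in> X. \<forall>x\<in>K. y \<in> T {x}}"
    proof
      fix y assume y: "y \<in> T K"
      have "\<forall>x\<in>K. y \<in> T {x}"
      proof
        fix x assume "x \<in> K"
        then have "T K \<subseteq> T {x}" using anti[OF K, of "{x}"] by simp
        then show "y \<in> T {x}" using y by auto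
      qed
      then show "y \<in> {y \<in> X. \<forall>x\<in>K. y \<in> T {x}}" using sub[OF K] y by auto
    qed
  next
    show "{y \<in> X. \<forall>x\<in>K. y \<in> T {x}} \<subseteq> T K"
    proof
      fix y assume y: "y \<in> {y \<in> X. \<forall>x\<in>K. y \<in> T {x}}"
      have "K \<subseteq> T {y}"
      proof
        fix x assume "x \<in> K"
        then show "x \<in> T {y}" using y K symm[of x y] by auto
      qed
      then have "T (T {y}) \<subseteq> T K" using anti[of "T {y}" K] sub[of "{y}"] y by auto
      moreover have "y \<in> T (T {y})" using inv[of "{y}"] y by auto
      ultimately show "y \<in> T K" by auto
    qed
  qed
  show ?thesis
  proof (intro exI[of _ c] conjI ballI allI impI)
    fix x y assume "x \<in> X" "y \<in> X"
    then show "c x y \<in> {-1, 1}" "c x y = c y x" using symm unfolding c_def by auto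
  next
    fix K assume K: "K \<subseteq> X"
    have "(0 \<le> (INF x\<in>K. ereal (real_of_int (c x y)))) \<longleftrightarrow> (\<forall>x\<in>K. y \<in> T {x})" for y
      by (auto simp: le_INF_iff c_def)
    then show "T K = cdual X c K" unfolding cdual_def key[OF K] by auto
  qed
qed

end
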